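(* Let $\mathbf{C}$ be a category enriched over $\mathbf{Top}$ and let $\mathfrak{G} = (G_A)_{A \in \mathrm{Ob}(\mathbf{C})}$ be a family of groups with $G_A \le \mathrm{Aut}_\mathbf{C}(A)$ for all $A$. Let $A, S \in \mathrm{Ob}(\mathbf{C})$ be such that $\hom(A,S)$ is locally compact second-countable Hausdorff and $\mathrm{Aut}_\mathbf{C}(A)$ is a finite discrete group, and let $q_{AS} : \hom(A,S) \to \binom{S}{A}_\mathfrak{G}$, $f \mapsto f/{\sim_\mathfrak{G}}$, be the quotient map. Then for every Borel set $W \subseteq \hom(A,S)$, the set $q_{AS}(W)$ is Borel in $\binom{S}{A}_\mathfrak{G}$.
   Context: A category is enriched over $\mathbf{Top}$ if each homset is a topological space and composition is continuous. $\mathrm{Aut}_\mathbf{C}(A)$ is the group of invertible morphisms $A \to A$ (with the topology inherited from $\hom(A,A)$). For $f, g \in \hom(A,S)$, $f \sim_\mathfrak{G} g$ iff $f = g \cdot \alpha$ for some $\alpha \in G_A$; $\binom{S}{A}_\mathfrak{G} = \hom(A,S)/{\sim_\mathfrak{G}}$ carries the quotient topology (the finest topology making $q_{AS}$ continuous). *)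

theory Defs
  imports "HOL-Analysis.Analysis"
begin

definition top_enriched_category ::
  "'o set \<Rightarrow> ('o \<Rightarrow> 'o \<Rightarrow> 'm set) \<Rightarrow> ('m \<Rightarrow> 'm \<Rightarrow> 'm) \<Rightarrow> ('o \<Rightarrow> 'm)
   \<Rightarrow> ('o \<Rightarrow> 'o \<Rightarrow> 'm topology) \<Rightarrow> bool" where
  "top_enriched_category Ob hom cmp ident T \<longleftrightarrow>
     (\<forall>A\<in>Ob. ident A \<in> hom A A) \<and>
     (\<forall>A\<in>Ob. \<forall>B\<in>Ob. \<forall>C\<in>Ob. \<forall>f\<in>hom A B. \<forall>g\<in>hom B C. cmp g f \<in> hom A C) \<and>
     (\<forall>A\<in>Ob. \<forall>B\<in>Ob. \<forall>C\<in>Ob. \<forall>D\<in>Ob. \<forall>f\<in>hom A B. \<forall>g\<in>hom B C. \<forall>h\<in>hom C D.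
        cmp h (cmp g f) = cmp (cmp h g) f) \<and>
     (\<forall>A\<in>Ob. \<forall>B\<in>Ob. \<forall>f\<in>hom A B. cmp (ident B) f = f \<and> cmp f (ident A) = f) \<and>
     (\<forall>A\<in>Ob. \<forall>B\<in>Ob. topspace (T A B) = hom A B) \<and>
     (\<forall>A\<in>Ob. \<forall>B\<in>Ob. \<forall>C\<in>Ob.
        continuous_map (prod_topology (T B C) (T A B)) (T A C) (\<lambda>(g, f). cmp g f))"

definition Aut :: "('o \<Rightarrow> 'o \<Rightarrow> 'm set) \<Rightarrow> ('m \<Rightarrow> 'm \<Rightarrow> 'm) \<Rightarrow> ('o \<Rightarrow> 'm) \<Rightarrow> 'o \<Rightarrow> 'm set" where
  "Aut hom cmp ident A =
     {f \<in> hom A A. \<exists>g\<in>hom A A. cmp g f = ident A \<and> cmp f g = ident A}"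

definition aut_subgroup ::
  "('o \<Rightarrow> 'o \<Rightarrow> 'm set) \<Rightarrow> ('m \<Rightarrow> 'm \<Rightarrow> 'm) \<Rightarrow> ('o \<Rightarrow> 'm) \<Rightarrow> 'o \<Rightarrow> 'm set \<Rightarrow> bool" where
  "aut_subgroup hom cmp ident A H \<longleftrightarrow>
     H \<subseteq> Aut hom cmp ident A \<and> ident A \<in> H \<and>
     (\<forall>f\<in>H. \<forall>g\<in>H. cmp g f \<in> H) \<and>
     (\<forall>f\<in>H. \<exists>g\<in>H. cmp g f = ident A \<and> cmp f g = ident A)"

definition grel :: "('m \<Rightarrow> 'm \<Rightarrow> 'm) \<Rightarrow> 'm set \<Rightarrow> 'm \<Rightarrow> 'm \<Rightarrow> bool" where
  "grel cmp GA f g \<longleftrightarrow> (\<exists>\<alpha>\<in>GA. f = cmp g \<alpha>)"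

definition qmap :: "'m set \<Rightarrow> ('m \<Rightarrow> 'm \<Rightarrow> 'm) \<Rightarrow> 'm set \<Rightarrow> 'm \<Rightarrow> 'm set" where
  "qmap H cmp GA f = {g \<in> H. grel cmp GA f g}"

definition quot_topology :: "'a topology \<Rightarrow> ('a \<Rightarrow> 'b) \<Rightarrow> 'b topology" where
  "quot_topology X q =
     topology (\<lambda>U. U \<subseteq> q ` topspace X \<and> openin X {x \<in> topspace X. q x \<in> U})"

definition borel_sets_of :: "'a topology \<Rightarrow> 'a set set" where
  "borel_sets_of X = sigma_sets (topspace X) {U. openin X U}"

end

theory Submission
  imports Defs
begin

theorem lemma4p4:
  fixes Ob :: "'o set" and hom :: "'o \<Rightarrow> 'o \<Rightarrow> 'm set"
    and cmp :: "'m \<Rightarrow> 'm \<Rightarrow> 'm" and ident :: "'o \<Rightarrow> 'm"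
    and T :: "'o \<Rightarrow> 'o \<Rightarrow> 'm topology" and G :: "'o \<Rightarrow> 'm set"
    and A S :: 'o and W :: "'m set"
  assumes cat: "top_enriched_category Ob hom cmp ident T"
    and G: "\<forall>B\<in>Ob. aut_subgroup hom cmp ident B (G B)"
    and A: "A \<in> Ob" and S: "S \<in> Ob"
    and lc: "locally_compact_space (T A S)"
    and sc: "second_countable (T A S)"
    and hd: "Hausdorff_space (T A S)"
    and fin: "finite (Aut hom cmp ident A)"
    and disc: "subtopology (T A A) (Aut hom cmp ident A)
                 = discrete_topology (Aut hom cmp ident A)"
    and W: "W \<in> borel_sets_of (T A S)"
  shows "qmap (hom A S) cmp (G A) ` W
           \<in> borel_sets_of (quot_topology (T A S) (qmap (hom A S) cmp (G A)))"
proof -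
  define X where "X = T A S"
  define H where "H = hom A S"
  define GA where "GA = G A"
  define q where "q = qmap H cmp GA"
  define Y where "Y = quot_topology X q"
  note catd = cat[unfolded top_enriched_category_def]
  have tX: "topspace X = H" using catd A S by (simp add: X_def H_def)
  have tAA: "topspace (T A A) = hom A A" using catd A by simp
  have GAsub: "aut_subgroup hom cmp ident A GA" using G A by (simp add: GA_def)
  have GAh: "GA \<subseteq> hom A A" using GAsub by (auto simp: aut_subgroup_def Aut_def)
  have finG: "finite GA" using GAsub fin by (auto simp: aut_subgroup_def intro: finite_subset)
  have idG: "ident A \<in> GA" using GAsub by (simp add: aut_subgroup_def)
  have mulG: "\<And>a b. a\<in>GA \<Longrightarrow> b\<in>GA \<Longrightarrow> cmp b a \<in> GA" using GAsub by (simp add: aut_subgroup_def)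
  have invG: "\<And>a. a\<in>GA \<Longrightarrow> \<exists>b\<in>GA. cmp b a = ident A \<and> cmp a b = ident A"
    using GAsub by (simp add: aut_subgroup_def)
  have c2: "\<forall>A\<in>Ob. \<forall>B\<in>Ob. \<forall>C\<in>Ob. \<forall>f\<in>hom A B. \<forall>g\<in>hom B C. cmp g f \<in> hom A C"
    by (rule conjunct1[OF conjunct2[OF catd]])
  have c3: "\<forall>A\<in>Ob. \<forall>B\<in>Ob. \<forall>C\<in>Ob. \<forall>D\<in>Ob. \<forall>f\<in>hom A B. \<forall>g\<in>hom B C. \<forall>h\<in>hom C D.
        cmp h (cmp g f) = cmp (cmp h g) f"
    by (rule conjunct1[OF conjunct2[OF conjunct2[OF catd]]])
  have c4: "\<forall>A\<in>Ob. \<forall>B\<in>Ob. \<forall>f\<in>hom A B. cmp (ident B) f = f \<and> cmp f (ident A) = f"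
    by (rule conjunct1[OF conjunct2[OF conjunct2[OF conjunct2[OF catd]]]])
  have c6: "\<forall>A\<in>Ob. \<forall>B\<in>Ob. \<forall>C\<in>Ob.
        continuous_map (prod_topology (T B C) (T A B)) (T A C) (\<lambda>(g, f). cmp g f)"
    using catd by (elim conjE)
  have cmpH: "\<And>f a. f\<in>H \<Longrightarrow> a\<in>GA \<Longrightarrow> cmp f a \<in> H"
  proof -
    fix f a assume "f\<in>H" "a\<in>GA"
    then show "cmp f a \<in> H" using c2[rule_format, OF A A S, of a f] GAh unfolding H_def by blast
  qed
  have assoc: "\<And>f a b. f\<in>H \<Longrightarrow> a\<in>GA \<Longrightarrow> b\<in>GA \<Longrightarrow> cmp (cmp f a) b = cmp f (cmp a b)"
  proof -
    fix f a b assume f: "f\<in>H" and a: "a\<in>GA" and b: "b\<in>GA"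
    have "cmp f (cmp a b) = cmp (cmp f a) b"
      using c3[rule_format, OF A A A S, of b a f] GAh f a b unfolding H_def by blast
    then show "cmp (cmp f a) b = cmp f (cmp a b)" by simp
  qed
  have assocG: "\<And>a b c. a\<in>GA \<Longrightarrow> b\<in>GA \<Longrightarrow> c\<in>GA \<Longrightarrow> cmp a (cmp b c) = cmp (cmp a b) c"
  proof -
    fix a b c assume "a\<in>GA" "b\<in>GA" "c\<in>GA"
    then show "cmp a (cmp b c) = cmp (cmp a b) c"
      using c3[rule_format, OF A A A A, of c b a] GAh by blast
  qed
  have idl: "\<And>a. a\<in>GA \<Longrightarrow> cmp (ident A) a = a" using c4[rule_format, OF A A] GAh by blast
  have idr: "\<And>f. f\<in>H \<Longrightarrow> cmp f (ident A) = f" using c4[rule_format, OF A S] unfolding H_def by blast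
  have cont: "\<And>a. a\<in>GA \<Longrightarrow> continuous_map X X (\<lambda>f. cmp f a)"
  proof -
    fix a assume a: "a\<in>GA"
    have c: "continuous_map (prod_topology X (T A A)) X (\<lambda>(g, f). cmp g f)"
      using c6[rule_format, OF A A S] unfolding X_def by simp
    have "continuous_map X (prod_topology X (T A A)) (\<lambda>f. (f, a))"
      using a GAh tAA by (auto simp: continuous_map_pairwise o_def)
    from continuous_map_compose[OF this c] show "continuous_map X X (\<lambda>f. cmp f a)"
      by (simp add: o_def)
  qed
  define N where "N B f = (\<Sum>a\<in>GA. indicator B (cmp f a) :: ennreal)" for B f
  have Nc: "\<And>B f. N B f = of_nat (card {a\<in>GA. cmp f a \<in> B})"
  proof -
    fix B f
    have "N B f = (\<Sum>a\<in>GA. indicator {a. cmp f a \<in> B} a)"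
      unfolding N_def by (intro sum.cong) (auto simp: indicator_def)
    also have "\<dots> = of_nat (card (GA \<inter> {a. cmp f a \<in> B}))"
      using finG by (simp add: indicator_def)
    also have "GA \<inter> {a. cmp f a \<in> B} = {a\<in>GA. cmp f a \<in> B}" by blast
    finally show "N B f = of_nat (card {a\<in>GA. cmp f a \<in> B})" .
  qed
  have Ninv: "\<And>B f b. f\<in>H \<Longrightarrow> b\<in>GA \<Longrightarrow> N B (cmp f b) = N B f"
  proof -
    fix B f b assume f: "f\<in>H" and b: "b\<in>GA"
    obtain b' where b': "b'\<in>GA" "cmp b' b = ident A" "cmp b b' = ident A" using invG[OF b] by blast
    show "N B (cmp f b) = N B f"
      unfolding N_def
    proof (rule sum.reindex_bij_witness[where i="\<lambda>a. cmp b' a" and j="\<lambda>a. cmp b a"])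
      fix a assume a: "a\<in>GA"
      show "cmp b' (cmp b a) = a" using assocG[OF b'(1) b a] b' idl a by simp
      show "cmp b a \<in> GA" using mulG a b by simp
      show "cmp b (cmp b' a) = a" using assocG[OF b b'(1) a] b' idl a by simp
      show "cmp b' a \<in> GA" using mulG a b' by simp
      show "indicator B (cmp f (cmp b a)) = indicator B (cmp (cmp f b) a)"
        using assoc[OF f b a] by simp
    qed
  qed
  have qmem: "\<And>f. f\<in>H \<Longrightarrow> f \<in> q f"
    using idG idr by (force simp: q_def qmap_def grel_def)
  define rep where "rep y = (SOME f. f \<in> y)" for y :: "'m set"
  define nf where "nf B y = N B (rep y)" for B y
  have nfq: "\<And>B f. f\<in>H \<Longrightarrow> nf B (q f) = N B f"
  proof -
    fix B f assume f: "f\<in>H"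
    have "rep (q f) \<in> q f" unfolding rep_def using qmem[OF f] by (rule someI)
    then obtain g \<alpha> where g: "g \<in> H" "\<alpha>\<in>GA" "f = cmp g \<alpha>" "rep (q f) = g"
      by (auto simp: q_def qmap_def grel_def)
    then show "nf B (q f) = N B f" using Ninv by (simp add: nf_def)
  qed
  have qeq: "\<And>f a. f\<in>H \<Longrightarrow> a\<in>GA \<Longrightarrow> q (cmp f a) = q f"
  proof -
    fix f a assume f: "f\<in>H" and a: "a\<in>GA"
    obtain a' where a': "a'\<in>GA" "cmp a' a = ident A" "cmp a a' = ident A" using invG[OF a] by blast
    have "(\<exists>\<beta>\<in>GA. cmp f a = cmp h \<beta>) \<longleftrightarrow> (\<exists>\<beta>\<in>GA. f = cmp h \<beta>)" if h: "h \<in> H" for h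
    proof
      assume "\<exists>\<beta>\<in>GA. cmp f a = cmp h \<beta>"
      then obtain \<beta> where \<beta>: "\<beta>\<in>GA" "cmp f a = cmp h \<beta>" by blast
      have "f = cmp f (cmp a a')" using a' idr f by simp
      also have "\<dots> = cmp (cmp f a) a'" using assoc f a a'(1) by simp
      also have "\<dots> = cmp h (cmp \<beta> a')" using \<beta> assoc h a'(1) by simp
      finally show "\<exists>\<beta>\<in>GA. f = cmp h \<beta>" using mulG \<beta>(1) a'(1) by blast
    next
      assume "\<exists>\<beta>\<in>GA. f = cmp h \<beta>"
      then obtain \<beta> where \<beta>: "\<beta>\<in>GA" "f = cmp h \<beta>" by blast
      then have "cmp f a = cmp h (cmp \<beta> a)" using assoc h a by simp
      then show "\<exists>\<beta>\<in>GA. cmp f a = cmp h \<beta>" using mulG \<beta>(1) a by blast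
    qed
    then show "q (cmp f a) = q f" by (auto simp: q_def qmap_def grel_def)
  qed
  have istop: "istopology (\<lambda>U. U \<subseteq> q ` H \<and> openin X {x\<in>H. q x \<in> U})"
    unfolding istopology_def
  proof (rule conjI; intro allI impI)
    fix U V assume U: "U \<subseteq> q ` H \<and> openin X {x\<in>H. q x \<in> U}" and V: "V \<subseteq> q ` H \<and> openin X {x\<in>H. q x \<in> V}"
    have "{x\<in>H. q x \<in> U \<inter> V} = {x\<in>H. q x \<in> U} \<inter> {x\<in>H. q x \<in> V}" by auto
    then show "U \<inter> V \<subseteq> q ` H \<and> openin X {x\<in>H. q x \<in> U \<inter> V}" using U V by auto
  next
    fix K assume K: "\<forall>U\<in>K. U \<subseteq> q ` H \<and> openin X {x\<in>H. q x \<in> U}"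
    have "{x\<in>H. q x \<in> \<Union>K} = \<Union>((\<lambda>U. {x\<in>H. q x \<in> U}) ` K)" by auto
    then show "\<Union>K \<subseteq> q ` H \<and> openin X {x\<in>H. q x \<in> \<Union>K}" using K by auto
  qed
  have openY: "\<And>U. openin Y U \<longleftrightarrow> U \<subseteq> q ` H \<and> openin X {x\<in>H. q x \<in> U}"
    unfolding Y_def quot_topology_def tX topology_inverse'[OF istop] by simp
  have tY: "topspace Y = q ` H"
  proof
    show "topspace Y \<subseteq> q ` H" using openY[of "topspace Y"] by simp
    have "{x\<in>H. q x \<in> q ` H} = H" by auto
    then have "openin Y (q ` H)" using openY openin_topspace[of X] tX by simp
    then show "q ` H \<subseteq> topspace Y" by (rule openin_subset)
  qed
  define MY where "MY = sigma (q ` H) {U. openin Y U}"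
  have opsub: "{U. openin Y U} \<subseteq> Pow (q ` H)" using tY by (blast dest: openin_subset)
  have setsMY: "sets MY = sigma_sets (q ` H) {U. openin Y U}"
    unfolding MY_def using opsub by (rule sets_measure_of)
  have spMY: "space MY = q ` H"
    unfolding MY_def using opsub by (rule space_measure_of)
  have opsubX: "{U. openin X U} \<subseteq> Pow H" using tX by (blast dest: openin_subset)
  define D where "D = {B \<in> sigma_sets H {U. openin X U}. nf B \<in> borel_measurable MY}"
  have Dyn: "Dynkin_system H D"
  proof (rule Dynkin_systemI)
    fix B assume "B \<in> D" then show "B \<subseteq> H"
      unfolding D_def using sigma_sets_into_sp[OF opsubX] by blast
  next
    have "H \<in> sigma_sets H {U. openin X U}" using sigma_sets_top .
    moreover have "nf H \<in> borel_measurable MY"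
    proof -
      have eq: "nf H y = of_nat (card GA)" if yin: "y \<in> space MY" for y
      proof -
        obtain f where f: "f \<in> H" "y = q f" using yin spMY by auto
        have "{a\<in>GA. cmp f a \<in> H} = GA" using cmpH f by auto
        then show ?thesis using f nfq Nc by simp
      qed
      show ?thesis by (subst measurable_cong[OF eq]) simp_all
    qed
    ultimately show "H \<in> D" unfolding D_def by blast
  next
    fix B assume B: "B \<in> D"
    then have Bs: "B \<subseteq> H" unfolding D_def using sigma_sets_into_sp[OF opsubX] by blast
    have "H - B \<in> sigma_sets H {U. openin X U}" using B unfolding D_def by (auto intro: sigma_sets.Compl)
    moreover have "nf (H - B) \<in> borel_measurable MY"
    proof -
      have eq: "nf (H - B) y = of_nat (card GA) - nf B y" if yin: "y \<in> space MY" for y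
      proof -
        obtain f where f: "f \<in> H" "y = q f" using yin spMY by auto
        have e: "{a\<in>GA. cmp f a \<in> H - B} = GA - {a\<in>GA. cmp f a \<in> B}" using cmpH f by auto
        have le: "card {a\<in>GA. cmp f a \<in> B} \<le> card GA" using finG by (intro card_mono) auto
        have "card {a\<in>GA. cmp f a \<in> H - B} = card GA - card {a\<in>GA. cmp f a \<in> B}"
          unfolding e using finG by (intro card_Diff_subset) auto
        moreover have "(of_nat (card GA) :: ennreal) = of_nat (card GA - card {a\<in>GA. cmp f a \<in> B}) + of_nat (card {a\<in>GA. cmp f a \<in> B})"
          using le by (simp flip: of_nat_add)
        ultimately show ?thesis using f nfq Nc
          by (simp add: ennreal_add_diff_cancel ennreal_of_nat_neq_top)
      qed
      have "(\<lambda>y. of_nat (card GA) - nf B y) \<in> borel_measurable MY"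
        using B unfolding D_def by (intro borel_measurable_minus_ennreal) auto
      then show ?thesis by (subst measurable_cong[OF eq]) simp_all
    qed
    ultimately show "H - B \<in> D" unfolding D_def by blast
  next
    fix B :: "nat \<Rightarrow> 'm set" assume dj: "disjoint_family B" and rB: "range B \<subseteq> D"
    have "(\<Union>i. B i) \<in> sigma_sets H {U. openin X U}" using rB unfolding D_def
      by (intro sigma_sets.Union) auto
    moreover have "nf (\<Union>i. B i) \<in> borel_measurable MY"
    proof -
      have eq: "nf (\<Union>i. B i) y = (\<Sum>i. nf (B i) y)" if yin: "y \<in> space MY" for y
      proof -
        obtain f where f: "f \<in> H" "y = q f" using yin spMY by auto
        have "N (\<Union>i. B i) f = (\<Sum>a\<in>GA. \<Sum>i. indicator (B i) (cmp f a))"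
          unfolding N_def using suminf_indicator[OF dj] by simp
        also have "\<dots> = (\<Sum>i. \<Sum>a\<in>GA. indicator (B i) (cmp f a))"
          by (rule suminf_sum[symmetric]) simp
        finally show ?thesis using f nfq by (simp add: N_def)
      qed
      have "(\<lambda>y. \<Sum>i. nf (B i) y) \<in> borel_measurable MY"
        using rB unfolding D_def by (intro borel_measurable_suminf_order) auto
      then show ?thesis by (subst measurable_cong[OF eq]) simp_all
    qed
    ultimately show "(\<Union>i. B i) \<in> D" unfolding D_def by blast
  qed
  have opensD: "{U. openin X U} \<subseteq> D"
  proof
    fix U assume "U \<in> {U. openin X U}"
    then have U: "openin X U" by simp
    have "nf U \<in> borel_measurable MY"
    proof (rule borel_measurableI_greater)
      fix t :: ennreal
      have "openin Y {y \<in> space MY. t < nf U y}"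
        unfolding openY
      proof
        show "{y \<in> space MY. t < nf U y} \<subseteq> q ` H" using spMY by auto
        have e: "{x\<in>H. q x \<in> {y \<in> space MY. t < nf U y}} = {x\<in>H. t < N U x}"
          using spMY nfq by auto
        show "openin X {x\<in>H. q x \<in> {y \<in> space MY. t < nf U y}}"
          unfolding e openin_subopen[of X "{x\<in>H. t < N U x}"]
        proof
          fix x assume x: "x \<in> {x\<in>H. t < N U x}"
          define Sx where "Sx = {a\<in>GA. cmp x a \<in> U}"
          define V where "V = \<Inter>(insert H ((\<lambda>a. {g\<in>topspace X. cmp g a \<in> U}) ` Sx))"
          have "openin X V" unfolding V_def
          proof (rule openin_Inter)
            show "finite (insert H ((\<lambda>a. {g\<in>topspace X. cmp g a \<in> U}) ` Sx))"
              using finG by (simp add: Sx_def)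
          next
            fix Z assume "Z \<in> insert H ((\<lambda>a. {g\<in>topspace X. cmp g a \<in> U}) ` Sx)"
            then show "openin X Z"
              using tX openin_topspace[of X]
              by (auto simp: Sx_def intro!: openin_continuous_map_preimage[OF cont U])
          qed simp
          moreover have "x \<in> V" using x tX by (auto simp: V_def Sx_def)
          moreover have "V \<subseteq> {x\<in>H. t < N U x}"
          proof
            fix g assume g: "g \<in> V"
            then have gH: "g \<in> H" by (simp add: V_def)
            have "Sx \<subseteq> {a\<in>GA. cmp g a \<in> U}" using g tX by (auto simp: V_def Sx_def)
            then have "card Sx \<le> card {a\<in>GA. cmp g a \<in> U}" using finG by (intro card_mono) auto
            then have "N U x \<le> N U g" by (simp add: Nc Sx_def)
            then show "g \<in> {x\<in>H. t < N U x}" using x gH by auto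
          qed
          ultimately show "\<exists>T. openin X T \<and> x \<in> T \<and> T \<subseteq> {x\<in>H. t < N U x}" by blast
        qed
      qed
      then show "{y \<in> space MY. t < nf U y} \<in> sets MY"
        unfolding setsMY by (auto intro: sigma_sets.Basic)
    qed
    moreover have "U \<in> sigma_sets H {U. openin X U}" using U by (auto intro: sigma_sets.Basic)
    ultimately show "U \<in> D" unfolding D_def by blast
  qed
  have IS: "Int_stable {U. openin X U}" by (auto simp: Int_stable_def)
  have eqD: "sigma_sets H {U. openin X U} = D"
    using Dynkin_system.Dynkin_lemma[OF Dyn IS opensD] unfolding D_def by blast
  have WD: "W \<in> D" using W eqD tX by (simp add: borel_sets_of_def X_def)
  then have WH: "W \<subseteq> H" unfolding D_def using sigma_sets_into_sp[OF opsubX] by blast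
  have qW: "q ` W = {y \<in> space MY. 0 < nf W y}"
  proof
    show "q ` W \<subseteq> {y \<in> space MY. 0 < nf W y}"
    proof
      fix y assume "y \<in> q ` W"
      then obtain f where f: "f \<in> W" "y = q f" by auto
      have "ident A \<in> {a\<in>GA. cmp f a \<in> W}" using idG idr f WH by auto
      then have "card {a\<in>GA. cmp f a \<in> W} > 0" using finG by (auto simp: card_gt_0_iff)
      then show "y \<in> {y \<in> space MY. 0 < nf W y}" using f WH spMY nfq Nc by auto
    qed
  next
    show "{y \<in> space MY. 0 < nf W y} \<subseteq> q ` W"
    proof
      fix y assume y: "y \<in> {y \<in> space MY. 0 < nf W y}"
      then obtain f where f: "f \<in> H" "y = q f" using spMY by auto
      then have "card {a\<in>GA. cmp f a \<in> W} > 0" using y nfq Nc by auto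
      then obtain a where a: "a \<in> GA" "cmp f a \<in> W" by (metis (no_types, lifting) card.empty empty_Collect_eq less_irrefl)
      then have "y = q (cmp f a)" using qeq f by simp
      then show "y \<in> q ` W" using a by blast
    qed
  qed
  have mW: "nf W \<in> borel_measurable MY" using WD unfolding D_def by blast
  have "nf W -` {0<..} \<inter> space MY \<in> sets MY"
    by (rule measurable_sets[OF mW]) simp
  moreover have "nf W -` {0<..} \<inter> space MY = {y \<in> space MY. 0 < nf W y}" by auto
  ultimately have "q ` W \<in> sets MY" unfolding qW by simp
  then have "q ` W \<in> borel_sets_of Y" unfolding setsMY borel_sets_of_def tY .
  then show ?thesis by (simp add: q_def Y_def X_def H_def GA_def)
qed

end
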